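(* Let $w$ be a nonnegative continuous weight on $[-1,1]$ and $\{p_l\}$ the orthonormal polynomials (positive leading coefficients) with recurrence $b_{l+1}p_{l+1}(x)=(x-a_l)p_l(x)-b_lp_{l-1}(x)$, $p_{-1}=0$, $p_0=1/b_0$, $a_l\in\mathbb{R}$, $b_l>0$. Let $0\le m\le n$, $\gamma\in\mathbb{R}$, $\delta\ge0$. Then for $x\ne y$: $\sum_{k=m}^np_k(x)p_{k-m}(y,m)=b_{n+1}\dfrac{p_{n+1}(x)p_{n-m}(y,m)-p_{n-m+1}(y,m)p_n(x)}{x-y}+b_m\dfrac{p_{m-1}(x)}{x-y}$, and $\sum_{k=m}^np_k(x)p_{k-m}(y,m,\gamma,\delta)=b_{n+1}\dfrac{p_{n+1}(x)p_{n-m}(y,m,\gamma,\delta)-p_{n-m+1}(y,m,\gamma,\delta)p_n(x)}{x-y}+\dfrac{p_m(x)((\delta-1)y-\gamma)}{x-y}+b_m\dfrac{p_{m-1}(x)}{x-y}$.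
   Context: Associated polynomials: $p_{-1}(x,m)=0$, $p_0(x,m)=1$, $b_{m+l+1}p_{l+1}(x,m)=(x-a_{m+l})p_l(x,m)-b_{m+l}p_{l-1}(x,m)$ for $l\ge0$. Scaled co-recursive associated polynomials: $p_0(x,m,\gamma,\delta)=1$, $p_1(x,m,\gamma,\delta)=(\delta x-a_m-\gamma)/b_{m+1}$, and $b_{m+l+1}p_{l+1}(x,m,\gamma,\delta)=(x-a_{m+l})p_l(x,m,\gamma,\delta)-b_{m+l}p_{l-1}(x,m,\gamma,\delta)$ for $l\ge1$. *)

theory Defs
  imports "HOL-Analysis.Analysis" "HOL-Computational_Algebra.Polynomial"
begin

fun assoc_poly :: "(nat \<Rightarrow> real) \<Rightarrow> (nat \<Rightarrow> real) \<Rightarrow> nat \<Rightarrow> nat \<Rightarrow> real \<Rightarrow> real" where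
  "assoc_poly a b m 0 x = 1"
| "assoc_poly a b m (Suc 0) x = (x - a m) / b (m + 1)"
| "assoc_poly a b m (Suc (Suc l)) x =
     ((x - a (m + l + 1)) * assoc_poly a b m (Suc l) x - b (m + l + 1) * assoc_poly a b m l x)
       / b (m + l + 2)"

fun sc_assoc_poly :: "(nat \<Rightarrow> real) \<Rightarrow> (nat \<Rightarrow> real) \<Rightarrow> nat \<Rightarrow> real \<Rightarrow> real \<Rightarrow> nat \<Rightarrow> real \<Rightarrow> real" where
  "sc_assoc_poly a b m \<gamma> \<delta> 0 x = 1"
| "sc_assoc_poly a b m \<gamma> \<delta> (Suc 0) x = (\<delta> * x - a m - \<gamma>) / b (m + 1)"
| "sc_assoc_poly a b m \<gamma> \<delta> (Suc (Suc l)) x =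
     ((x - a (m + l + 1)) * sc_assoc_poly a b m \<gamma> \<delta> (Suc l) x
        - b (m + l + 1) * sc_assoc_poly a b m \<gamma> \<delta> l x) / b (m + l + 2)"

end

theory Submission
  imports Defs
begin

lemma gen_cd:
  fixes P Q a b :: "nat \<Rightarrow> real" and x y :: real
  assumes PR: "\<And>l. b (l+1) * P (l+1) = (x - a l) * P l - (if l = 0 then 0 else b l * P (l - 1))"
    and Q0: "Q 0 = 1"
    and QR: "\<And>l. b (m + l + 2) * Q (Suc (Suc l)) = (y - a (m + l + 1)) * Q (Suc l) - b (m + l + 1) * Q l"
  shows "(x - y) * (\<Sum>k=m..m+j. P k * Q (k - m)) =
     b (m+j+1) * (P (m+j+1) * Q j - Q (j+1) * P (m+j)) + b m * (if m = 0 then 0 else P (m - 1))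
     + P m * (b (m+1) * Q 1 - (y - a m))"
proof (induction j)
  case 0
  have "b (m+1) * P (m+1) = (x - a m) * P m - (if m = 0 then 0 else b m * P (m - 1))" by (rule PR)
  then show ?case using Q0 by (cases "m = 0") (simp_all add: algebra_simps)
next
  case (Suc j)
  have s: "(\<Sum>k=m..m+Suc j. P k * Q (k - m)) = (\<Sum>k=m..m+j. P k * Q (k - m)) + P (m+j+1) * Q (j+1)"
    by simp
  have p1: "b (m+j+2) * P (m+j+2) = (x - a (m+j+1)) * P (m+j+1) - b (m+j+1) * P (m+j)"
    using PR[of "m+j+1"] by simp
  have q1: "b (m+j+2) * Q (j+2) = (y - a (m+j+1)) * Q (j+1) - b (m+j+1) * Q j"
    using QR[of j] by (simp add: numeral_2_eq_2)
  have "(x - y) * (\<Sum>k=m..m+Suc j. P k * Q (k - m)) = (x-y) * (\<Sum>k=m..m+j. P k * Q (k - m)) + (x-y) * P (m+j+1) * Q (j+1)"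
    using s by (simp add: algebra_simps)
  also have "\<dots> = b (m+j+1) * (P (m+j+1) * Q j - Q (j+1) * P (m+j)) + b m * (if m = 0 then 0 else P (m - 1))
     + P m * (b (m+1) * Q 1 - (y - a m)) + (x-y) * P (m+j+1) * Q (j+1)" using Suc by simp
  also have "\<dots> = (b (m+j+2) * P (m+j+2)) * Q (j+1) - (b (m+j+2) * Q (j+2)) * P (m+j+1)
     + b m * (if m = 0 then 0 else P (m - 1)) + P m * (b (m+1) * Q 1 - (y - a m))"
    unfolding p1 q1 by (simp add: algebra_simps)
  finally show ?case by (simp add: algebra_simps)
qed

theorem lemma3p1:
  fixes w :: "real \<Rightarrow> real" and p :: "nat \<Rightarrow> real poly"
    and a b :: "nat \<Rightarrow> real" and m n :: nat and \<gamma> \<delta> x y :: real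
  assumes w_cont: "continuous_on {-1..1} w"
    and w_nonneg: "\<And>t. t \<in> {-1..1} \<Longrightarrow> w t \<ge> 0"
    and p_deg: "\<And>l. degree (p l) = l"
    and p_lead: "\<And>l. lead_coeff (p l) > 0"
    and p_orth: "\<And>k l. integral {-1..1} (\<lambda>t. poly (p k) t * poly (p l) t * w t)
                        = (if k = l then 1 else 0)"
    and b_pos: "\<And>l. b l > 0"
    and p0: "\<And>t. poly (p 0) t = 1 / b 0"
    and rec0: "\<And>t. b 1 * poly (p 1) t = (t - a 0) * poly (p 0) t"
    and rec: "\<And>l t. l \<ge> 1 \<Longrightarrow>
       b (l + 1) * poly (p (l + 1)) t = (t - a l) * poly (p l) t - b l * poly (p (l - 1)) t"
    and mn: "m \<le> n"
    and delta: "\<delta> \<ge> 0"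
    and xy: "x \<noteq> y"
  shows "((\<Sum>k=m..n. poly (p k) x * assoc_poly a b m (k - m) y)
           = b (n + 1) * (poly (p (n + 1)) x * assoc_poly a b m (n - m) y
                          - assoc_poly a b m (n - m + 1) y * poly (p n) x) / (x - y)
             + b m * (if m = 0 then 0 else poly (p (m - 1)) x) / (x - y))
         \<and> ((\<Sum>k=m..n. poly (p k) x * sc_assoc_poly a b m \<gamma> \<delta> (k - m) y)
           = b (n + 1) * (poly (p (n + 1)) x * sc_assoc_poly a b m \<gamma> \<delta> (n - m) y
                          - sc_assoc_poly a b m \<gamma> \<delta> (n - m + 1) y * poly (p n) x) / (x - y)
             + poly (p m) x * ((\<delta> - 1) * y - \<gamma>) / (x - y)
             + b m * (if m = 0 then 0 else poly (p (m - 1)) x) / (x - y))"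
  proof -
  define P where "P = (\<lambda>k. poly (p k) x)"
  have PR: "\<And>l. b (l+1) * P (l+1) = (x - a l) * P l - (if l = 0 then 0 else b l * P (l - 1))"
  proof -
    fix l :: nat
    show "b (l+1) * P (l+1) = (x - a l) * P l - (if l = 0 then 0 else b l * P (l - 1))"
    proof (cases "l = 0")
      case True
      then show ?thesis using rec0[of x] unfolding P_def by simp
    next
      case False
      then have "l \<ge> 1" by simp
      from rec[OF this, of x] False show ?thesis unfolding P_def by simp
    qed
  qed
  obtain j where j: "n = m + j" using mn le_Suc_ex by blast
  have xy': "x - y \<noteq> 0" using xy by simp
  have A: "(x - y) * (\<Sum>k=m..m+j. P k * assoc_poly a b m (k - m) y) =
     b (m+j+1) * (P (m+j+1) * assoc_poly a b m j y - assoc_poly a b m (j+1) y * P (m+j)) + b m * (if m = 0 then 0 else P (m - 1))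
     + P m * (b (m+1) * assoc_poly a b m 1 y - (y - a m))"
  proof (rule gen_cd[OF PR])
    fix l
    have nz: "b (m + l + 2) \<noteq> 0" using b_pos[of "m+l+2"] by simp
    show "b (m + l + 2) * assoc_poly a b m (Suc (Suc l)) y = (y - a (m + l + 1)) * assoc_poly a b m (Suc l) y - b (m + l + 1) * assoc_poly a b m l y"
      using nz by (simp add: numeral_2_eq_2)
  qed simp
  have B: "(x - y) * (\<Sum>k=m..m+j. P k * sc_assoc_poly a b m \<gamma> \<delta> (k - m) y) =
     b (m+j+1) * (P (m+j+1) * sc_assoc_poly a b m \<gamma> \<delta> j y - sc_assoc_poly a b m \<gamma> \<delta> (j+1) y * P (m+j)) + b m * (if m = 0 then 0 else P (m - 1))
     + P m * (b (m+1) * sc_assoc_poly a b m \<gamma> \<delta> 1 y - (y - a m))"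
  proof (rule gen_cd[OF PR])
    fix l
    have nz: "b (m + l + 2) \<noteq> 0" using b_pos[of "m+l+2"] by simp
    show "b (m + l + 2) * sc_assoc_poly a b m \<gamma> \<delta> (Suc (Suc l)) y = (y - a (m + l + 1)) * sc_assoc_poly a b m \<gamma> \<delta> (Suc l) y - b (m + l + 1) * sc_assoc_poly a b m \<gamma> \<delta> l y"
      using nz by (simp add: numeral_2_eq_2)
  qed simp
  have A1: "b (m+1) * assoc_poly a b m 1 y - (y - a m) = 0"
    using b_pos[of "m+1"] by simp
  have B1: "b (m+1) * sc_assoc_poly a b m \<gamma> \<delta> 1 y - (y - a m) = (\<delta> - 1) * y - \<gamma>"
    using b_pos[of "m+1"] by (simp add: field_simps)
  show ?thesis
  proof
    show "(\<Sum>k=m..n. poly (p k) x * assoc_poly a b m (k - m) y)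
           = b (n + 1) * (poly (p (n + 1)) x * assoc_poly a b m (n - m) y
                          - assoc_poly a b m (n - m + 1) y * poly (p n) x) / (x - y)
             + b m * (if m = 0 then 0 else poly (p (m - 1)) x) / (x - y)"
      using A A1 xy' unfolding j P_def by (simp only: add_divide_distrib[symmetric] eq_divide_eq) (simp add: algebra_simps)
    show "(\<Sum>k=m..n. poly (p k) x * sc_assoc_poly a b m \<gamma> \<delta> (k - m) y)
           = b (n + 1) * (poly (p (n + 1)) x * sc_assoc_poly a b m \<gamma> \<delta> (n - m) y
                          - sc_assoc_poly a b m \<gamma> \<delta> (n - m + 1) y * poly (p n) x) / (x - y)
             + poly (p m) x * ((\<delta> - 1) * y - \<gamma>) / (x - y)
             + b m * (if m = 0 then 0 else poly (p (m - 1)) x) / (x - y)"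
      using B B1 xy' unfolding j P_def by (simp only: add_divide_distrib[symmetric] eq_divide_eq) (simp add: algebra_simps)
  qed
qed

end
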